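(* Let $k\ge 2$ and define the formal power series $D^{(k)}(x,y)=\sum_{n\ge 2}\sum_{j=k}^{(k-1)n} d^{(k)}_{n,j}\,x^j y^n\in\mathbb{Q}[x][[y]]$. Then, as formal power series in $y$ with coefficients in $\mathbb{Q}[x]$, $$(1+x^k y-x)\,D^{(k)}(x,y)=x^k y\,S^{(k)}(y)-x^{2k-1}y^2,$$ i.e. $D^{(k)}(x,y)=\dfrac{x^k yS^{(k)}(y)-x^{2k-1}y^2}{1+x^ky-x}$.
   Context: For $i\ge 1$, $s^{(k)}_i=\frac{k-1}{ki-1}\binom{ki-1}{i-1}$, and $S^{(k)}(z)=\sum_{i\ge1}s^{(k)}_i z^i$. For $n\ge2$ and $k\le j\le (k-1)n$, $d^{(k)}_{n,j}=\binom{kn-2-j}{n-2}-\sum_{\ell=1}^{\,n-\lceil j/(k-1)\rceil} s^{(k)}_\ell\binom{k(n-\ell)-1-j}{n-\ell-1}$; equivalently $d^{(k)}_{n,j}$ is the number of lattice paths with unit south and west steps from $((k-1)n,n-1)$ to $(j,1)$ that never touch the line $(k-1)y=x$. *)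

theory Defs
  imports "HOL-Computational_Algebra.Polynomial" "HOL-Computational_Algebra.Formal_Power_Series"
begin

definition s_coeff :: "nat \<Rightarrow> nat \<Rightarrow> rat" where
  "s_coeff k i = (of_nat (k - 1) / of_nat (k * i - 1)) * of_nat ((k * i - 1) choose (i - 1))"

definition S_fps :: "nat \<Rightarrow> rat poly fps" where
  "S_fps k = Abs_fps (\<lambda>i. if i \<ge> 1 then [:s_coeff k i:] else 0)"

text \<open>d^(k)_{n,j}; all natural-number subtractions below are nonnegative in the stated ranges.\<close>
definition d_coeff :: "nat \<Rightarrow> nat \<Rightarrow> nat \<Rightarrow> rat" where
  "d_coeff k n j = of_nat ((k * n - 2 - j) choose (n - 2))
     - (\<Sum>l = 1..n - nat \<lceil>real j / real (k - 1)\<rceil>.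
          s_coeff k l * of_nat ((k * (n - l) - 1 - j) choose (n - l - 1)))"

definition D_fps :: "nat \<Rightarrow> rat poly fps" where
  "D_fps k = Abs_fps (\<lambda>n. if n \<ge> 2 then (\<Sum>j = k..(k - 1) * n. monom (d_coeff k n j) j) else 0)"

end

theory Submission
  imports Defs
begin

definition AA :: "nat \<Rightarrow> nat \<Rightarrow> nat \<Rightarrow> int" where
  "AA k q x = (if q = 0 then 1 else int ((x + k*q) choose q) - int k * int ((x + k*q - 1) choose (q - 1)))"

lemma AA_zero: assumes "k \<ge> 1" "q \<ge> 1" shows "AA k q 0 = 0"
proof -
  have "q * ((k*q) choose q) = (k*q) * ((k*q - 1) choose (q - 1))"
    using times_binomial_minus1_eq[of q "k*q"] assms by simp
  hence "q * ((k*q) choose q) = q * (k * ((k*q - 1) choose (q - 1)))" by (simp add: ac_simps)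
  hence "((k*q) choose q) = k * ((k*q - 1) choose (q - 1))" using assms by simp
  then show ?thesis using assms unfolding AA_def by (simp flip: of_nat_mult)
qed

lemma AA_rec: assumes "k \<ge> 2" "q \<ge> 1" shows "AA k q (Suc x) = AA k q x + AA k (q-1) (x+k)"
proof (cases "q = 1")
  case True
  then show ?thesis unfolding AA_def by simp
next
  case False
  define r where "r = q - 2"
  have q: "q = Suc (Suc r)" using assms False unfolding r_def by arith
  define a where "a = x + k*q - 2"
  have e1: "Suc x + k*q = Suc (Suc (Suc a))" using assms q unfolding a_def by (simp add: algebra_simps)
  have e2: "x + k*q = Suc (Suc a)" using e1 by simp
  have e3: "x + k*q - 1 = Suc a" using e2 by simp
  have f1: "x + k + k*(q-1) = Suc (Suc a)" using q e2 by (simp add: algebra_simps)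
  have f3: "x + k + k*(q-1) - 1 = Suc a" using f1 by simp
  have c1: "Suc (Suc (Suc a)) choose Suc (Suc r) = (Suc (Suc a) choose Suc (Suc r)) + (Suc (Suc a) choose Suc r)"
    by (metis binomial_Suc_Suc add.commute)
  have c2: "Suc (Suc a) choose Suc r = (Suc a choose Suc r) + (Suc a choose r)"
    by (metis binomial_Suc_Suc add.commute)
  have "AA k q (Suc x) = int (Suc (Suc (Suc a)) choose Suc (Suc r)) - int k * int (Suc (Suc a) choose Suc r)"
    unfolding AA_def using q e1 e2 by simp
  moreover have "AA k q x = int (Suc (Suc a) choose Suc (Suc r)) - int k * int (Suc a choose Suc r)"
    unfolding AA_def using q e2 e3 by simp
  moreover have "AA k (q-1) (x+k) = int (Suc (Suc a) choose Suc r) - int k * int (Suc a choose r)"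
    unfolding AA_def using q f1 f3 by simp
  ultimately show ?thesis using c1 c2 by (simp add: algebra_simps)
qed

lemma RH:
  assumes k: "k \<ge> 2"
  shows "(\<Sum>q\<le>N. AA k q x * int ((y + k*(N-q) - 1) choose (N-q))) = int ((x+y+k*N-1) choose N)"
  using k
proof (induction N arbitrary: x)
  case 0
  then show ?case by (simp add: AA_def)
next
  case (Suc N)
  note IHN = Suc.IH
  show ?case
  proof (induction x)
    case 0
    have "(\<Sum>q\<le>Suc N. AA k q 0 * int ((y + k*(Suc N-q) - 1) choose (Suc N-q)))
        = AA k 0 0 * int ((y + k*(Suc N) - 1) choose (Suc N))
          + (\<Sum>q\<le>N. AA k (Suc q) 0 * int ((y + k*(Suc N-Suc q) - 1) choose (Suc N-Suc q)))"
      by (subst sum.atMost_Suc_shift) simp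
    also have "\<dots> = int ((y + k*(Suc N) - 1) choose (Suc N))"
    proof -
      have z: "\<And>q. AA k (Suc q) 0 = 0" using AA_zero[of k] k by simp
      have o: "AA k 0 0 = 1" by (simp add: AA_def)
      show ?thesis by (simp only: z o) simp
    qed
    finally show ?case by simp
  next
    case (Suc x)
    let ?C = "\<lambda>q. int ((y + k*(Suc N-q) - 1) choose (Suc N-q))"
    have "(\<Sum>q\<le>Suc N. AA k q (Suc x) * ?C q)
        = AA k 0 (Suc x) * ?C 0 + (\<Sum>q\<le>N. AA k (Suc q) (Suc x) * ?C (Suc q))"
      by (subst sum.atMost_Suc_shift) simp
    also have "\<dots> = AA k 0 x * ?C 0 + (\<Sum>q\<le>N. (AA k (Suc q) x + AA k q (x+k)) * ?C (Suc q))"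
    proof -
      have r: "\<And>q. AA k (Suc q) (Suc x) = AA k (Suc q) x + AA k q (x+k)" using AA_rec[of k] k by simp
      have o: "AA k 0 (Suc x) = AA k 0 x" by (simp add: AA_def)
      show ?thesis by (simp only: r o)
    qed
    also have "\<dots> = (AA k 0 x * ?C 0 + (\<Sum>q\<le>N. AA k (Suc q) x * ?C (Suc q)))
         + (\<Sum>q\<le>N. AA k q (x+k) * int ((y + k*(N-q) - 1) choose (N-q)))"
      by (simp add: algebra_simps sum.distrib)
    also have "AA k 0 x * ?C 0 + (\<Sum>q\<le>N. AA k (Suc q) x * ?C (Suc q)) = (\<Sum>q\<le>Suc N. AA k q x * ?C q)"
      by (subst sum.atMost_Suc_shift) simp
    also have "\<dots> = int ((x+y+k*Suc N-1) choose Suc N)" by (rule Suc.IH)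
    also have "(\<Sum>q\<le>N. AA k q (x+k) * int ((y + k*(N-q) - 1) choose (N-q))) = int ((x+k+y+k*N-1) choose N)"
      by (rule IHN[OF k])
    also have "int ((x+y+k*Suc N-1) choose Suc N) + int ((x+k+y+k*N-1) choose N) = int ((Suc x+y+k*Suc N-1) choose Suc N)"
    proof -
      define a where "a = x+y+k*Suc N-1"
      have a1: "Suc x+y+k*Suc N-1 = Suc a" using k unfolding a_def by simp
      have a2: "x+k+y+k*N-1 = a" unfolding a_def by simp
      show ?thesis unfolding a1 a2 a_def[symmetric] by simp
    qed
    finally show ?case .
  qed
qed

lemma s_AA:
  assumes k: "k \<ge> 2" and i: "i \<ge> 1"
  shows "s_coeff k i = of_int (AA k (i-1) (k-1))"
proof (cases "i = 1")
  case True
  then show ?thesis using k by (simp add: s_coeff_def AA_def)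
next
  case False
  define q where "q = i - 1"
  define M where "M = k*i - 1"
  have q1: "q \<ge> 1" using False i unfolding q_def by simp
  have Mq: "k - 1 + k*q = M" using k i unfolding q_def M_def by (cases i) (auto simp: algebra_simps)
  have "k*i \<ge> 2*1" using k i by (intro mult_le_mono) auto
  hence Mpos: "M > 0" unfolding M_def by simp
  have h: "q * (M choose q) = M * ((M - 1) choose (q - 1))"
    using times_binomial_minus1_eq[of q M] q1 by simp
  have h': "(of_nat q :: rat) * of_nat (M choose q) = of_nat M * of_nat ((M - 1) choose (q - 1))"
    using h by (metis of_nat_mult)
  have "AA k q (k-1) = int (M choose q) - int k * int ((M - 1) choose (q - 1))"
    unfolding AA_def using q1 Mq by simp
  hence A: "(of_int (AA k q (k-1)) :: rat) = of_nat (M choose q) - of_nat k * of_nat ((M - 1) choose (q - 1))"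
    by simp
  have Mr: "(of_nat M :: rat) = of_nat k * of_nat q + of_nat k - 1"
  proof -
    have "M + 1 = k*q + k" using Mq k by simp
    hence "(of_nat M :: rat) + 1 = of_nat k * of_nat q + of_nat k" by (metis of_nat_1 of_nat_add of_nat_mult)
    thus ?thesis by (simp add: algebra_simps)
  qed
  have "s_coeff k i = of_nat (k-1) / of_nat M * of_nat (M choose q)"
    unfolding s_coeff_def M_def q_def by simp
  also have "\<dots> = of_int (AA k q (k-1))"
  proof -
    have Mne: "(of_nat M :: rat) \<noteq> 0" using Mpos by simp
    have "of_nat M * (of_nat M * of_nat ((M - 1) choose (q - 1))) = of_nat M * (of_nat q * (of_nat (M choose q)::rat))"
      using h' by simp
    hence hh: "of_nat M * of_nat ((M - 1) choose (q - 1)) = of_nat q * (of_nat (M choose q)::rat)" using h' by simp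
    have "of_nat M * (of_nat (M choose q) - of_nat k * of_nat ((M - 1) choose (q - 1))) = (of_nat M - of_nat k * of_nat q) * (of_nat (M choose q)::rat)"
      using hh by (simp add: algebra_simps)
    also have "of_nat M - of_nat k * of_nat q = (of_nat (k-1) :: rat)" using Mr k by (simp add: of_nat_diff)
    finally have "of_nat M * of_int (AA k q (k-1)) = of_nat (k-1) * (of_nat (M choose q)::rat)" using A by simp
    thus ?thesis using Mne by (simp add: field_simps)
  qed
  finally show ?thesis unfolding q_def .
qed

lemma RHs:
  assumes k: "k \<ge> 2"
  shows "(\<Sum>l=1..Suc N. s_coeff k l * of_nat ((y + k*(Suc N-l) - 1) choose (Suc N-l))) = (of_nat ((k-1+y+k*N-1) choose N) :: rat)"
proof -
  have "(\<Sum>l=1..Suc N. s_coeff k l * of_nat ((y + k*(Suc N-l) - 1) choose (Suc N-l)))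
      = (\<Sum>q=0..N. s_coeff k (Suc q) * of_nat ((y + k*(N-q) - 1) choose (N-q)))"
    unfolding One_nat_def sum.atLeast_Suc_atMost_Suc_shift by (simp add: o_def)
  also have "\<dots> = (\<Sum>q\<le>N. of_int (AA k q (k-1) * int ((y + k*(N-q) - 1) choose (N-q))))"
    using k by (simp add: s_AA atLeast0AtMost)
  also have "\<dots> = of_int (\<Sum>q\<le>N. AA k q (k-1) * int ((y + k*(N-q) - 1) choose (N-q)))"
    by (simp only: of_int_sum)
  also have "\<dots> = of_nat ((k-1+y+k*N-1) choose N)"
    by (simp only: RH[OF k])
  finally show ?thesis .
qed

definition EE :: "nat \<Rightarrow> nat \<Rightarrow> nat \<Rightarrow> rat" where
  "EE k n j = of_nat ((k*n-2-j) choose (n-2))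
     - (\<Sum>l=1..n-2. s_coeff k l * of_nat ((k*(n-l)-1-j) choose (n-l-1)))"

lemma d_E:
  assumes k: "k \<ge> 2" and n: "n \<ge> 2" and j: "k \<le> j"
  shows "d_coeff k n j = EE k n j"
proof -
  define c where "c = nat \<lceil>real j / real (k - 1)\<rceil>"
  have mpos: "real (k-1) > 0" using k by simp
  have "real j / real (k-1) > 1" using mpos j k by (simp add: field_simps)
  hence "1 < \<lceil>real j / real (k - 1)\<rceil>" by (simp add: less_ceiling_iff)
  hence c2: "c \<ge> 2" unfolding c_def by linarith
  let ?g = "\<lambda>l. s_coeff k l * of_nat ((k*(n-l)-1-j) choose (n-l-1))"
  have "sum ?g {1..n-c} = sum ?g {1..n-2}"
  proof (rule sum.mono_neutral_left)
    show "finite {1..n-2}" by simp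
    show "{1..n-c} \<subseteq> {1..n-2}" using c2 by auto
    show "\<forall>l\<in>{1..n-2} - {1..n-c}. ?g l = 0"
    proof
      fix l assume l: "l \<in> {1..n-2} - {1..n-c}"
      define t where "t = n - l"
      have t2: "t \<ge> 2" and tc: "t < c" using l n unfolding t_def by auto
      have "int t < \<lceil>real j / real (k - 1)\<rceil>" using tc unfolding c_def by linarith
      hence "real t < real j / real (k-1)" by (simp add: less_ceiling_iff)
      hence "real t * real (k-1) < real j" using mpos by (simp add: field_simps)
      hence tj: "t * (k-1) < j" by (metis of_nat_less_iff of_nat_mult)
      have kt: "k * t = t * (k-1) + t" using k by (cases k) (auto simp: algebra_simps)
      have "k*t - 1 - j < t - 1" using tj kt t2 by linarith
      hence "(k*t - 1 - j) choose (t - 1) = 0" by (rule binomial_eq_0)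
      thus "?g l = 0" unfolding t_def by simp
    qed
  qed
  thus ?thesis unfolding d_coeff_def EE_def c_def by simp
qed

lemma E_base:
  assumes k: "k \<ge> 2" and n: "n \<ge> 2"
  shows "EE k n k = s_coeff k (n-1)"
proof -
  define N where "N = n - 2"
  have nN: "n = Suc (Suc N)" using n unfolding N_def by simp
  have R: "(\<Sum>l=1..Suc N. s_coeff k l * of_nat ((0 + k*(Suc N-l) - 1) choose (Suc N-l))) = (of_nat ((k-1+0+k*N-1) choose N) :: rat)"
    by (rule RHs[OF k])
  have "(\<Sum>l=1..Suc N. s_coeff k l * of_nat ((0 + k*(Suc N-l) - 1) choose (Suc N-l)))
      = (\<Sum>l=1..N. s_coeff k l * of_nat ((k*(Suc N-l) - 1) choose (Suc N-l))) + s_coeff k (Suc N)"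
    by (simp add: sum.cl_ivl_Suc)
  also have "(\<Sum>l=1..N. s_coeff k l * of_nat ((k*(Suc N-l) - 1) choose (Suc N-l)))
     = (\<Sum>l=1..n-2. s_coeff k l * of_nat ((k*(n-l)-1-k) choose (n-l-1)))"
  proof (rule sum.cong)
    show "{1..N} = {1..n-2}" unfolding N_def ..
    fix l assume l: "l \<in> {1..n-2}"
    have "k*(Suc N - l) + k = k*(n-l)" using l nN by (simp add: Suc_diff_le algebra_simps)
    hence "k*(Suc N - l) - 1 = k*(n-l)-1-k" by linarith
    moreover have "Suc N - l = n - l - 1" using nN by simp
    ultimately show "s_coeff k l * of_nat ((k*(Suc N-l) - 1) choose (Suc N-l)) = s_coeff k l * of_nat ((k*(n-l)-1-k) choose (n-l-1))"
      by simp
  qed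
  finally have "(\<Sum>l=1..n-2. s_coeff k l * of_nat ((k*(n-l)-1-k) choose (n-l-1))) + s_coeff k (n-1) = of_nat ((k-1+0+k*N-1) choose N)"
    using R nN by simp
  moreover have "k-1+0+k*N-1 = k*n-2-k" using nN k by (simp add: algebra_simps)
  ultimately show ?thesis unfolding EE_def N_def by (simp add: algebra_simps)
qed

lemma E_two: "EE k 2 j = 1"
  unfolding EE_def by simp

lemma E_top:
  assumes k: "k \<ge> 2" and n: "n \<ge> 2"
  shows "EE k n ((k-1)*n) = 1"
proof -
  have kn: "k*n = (k-1)*n + n" using k by (cases k) (auto simp: algebra_simps)
  have "(\<Sum>l=1..n-2. s_coeff k l * of_nat ((k*(n-l)-1-(k-1)*n) choose (n-l-1))) = 0"
  proof (rule sum.neutral, rule ballI)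
    fix l assume l: "l \<in> {1..n-2}"
    have nl: "n - l + l = n" using l by auto
    have a: "k*(n-l) + k*l = k*n" by (metis nl add_mult_distrib2)
    have b: "k*l \<ge> 2*l" using k by simp
    define X where "X = k*(n-l)"
    define Y where "Y = (k-1)*n"
    define Z where "Z = k*l"
    have "X + Z = Y + n" "Z \<ge> 2*l" "1 \<le> l" "l \<le> n - 2" using a b kn l unfolding X_def Y_def Z_def by auto
    hence "X - 1 - Y < n-l-1" by arith
    hence "k*(n-l)-1-(k-1)*n < n-l-1" unfolding X_def Y_def .
    thus "s_coeff k l * of_nat ((k*(n-l)-1-(k-1)*n) choose (n-l-1)) = 0" by (simp add: binomial_eq_0)
  qed
  moreover have "k*n-2-(k-1)*n = n-2" using kn by simp
  ultimately show ?thesis unfolding EE_def by simp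
qed

lemma pascal2: assumes "t \<ge> 2" shows "(a choose t) = ((a - 1) choose t) + ((a - 1) choose (t - 1))"
proof (cases a)
  case 0
  then show ?thesis using assms by simp
next
  case (Suc b)
  obtain u where u: "t = Suc u" using assms by (cases t) auto
  show ?thesis unfolding Suc u by simp
qed

lemma E_step:
  assumes k: "k \<ge> 2" and n: "n \<ge> 3" and j1: "k + 1 \<le> j" and j2: "j \<le> (k-1)*n"
  shows "EE k n (j-1) = EE k n j + (if 2*k \<le> j then EE k (n-1) (j-k) else 0)"
proof -
  define M where "M = n - 3"
  have nM: "n = Suc (Suc (Suc M))" using n unfolding M_def by simp
  have kn: "k*n = (k-1)*n + n" using k by (cases k) (auto simp: algebra_simps)
  let ?T1 = "\<lambda>l. (k*(n-l)-1-(j-1)) choose (n-l-1)"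
  let ?T2 = "\<lambda>l. (k*(n-l)-1-j) choose (n-l-1)"
  let ?T3 = "\<lambda>l. (k*(n-l)-1-j) choose (n-l-2)"
  have P1: "?T1 l = ?T2 l + ?T3 l" if l: "l \<in> {1..n-3}" for l
  proof -
    define t where "t = n - l"
    have t3: "t \<ge> 3" using l unfolding t_def by auto
    have "k*t-1-(j-1) = k*t - j" using j1 by simp
    moreover have "k*t - j - 1 = k*t-1-j" by simp
    ultimately have "?T1 l = ((k*t-j) choose (t-1))" unfolding t_def by simp
    also have "\<dots> = ((k*t-1-j) choose (t-1)) + ((k*t-1-j) choose (t-2))"
      using pascal2[of "t-1" "k*t-j"] t3 by (simp add: diff_diff_add numeral_2_eq_2)
    finally show ?thesis unfolding t_def by simp
  qed
  have P2: "?T1 (n-2) = ?T2 (n-2) + (if j < 2*k then 1 else 0)"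
  proof -
    have "n - (n-2) = 2" using n by simp
    hence "?T1 (n-2) = (2*k-1-(j-1))" "?T2 (n-2) = 2*k-1-j" by (simp_all add: mult.commute)
    moreover have "2*k-1-(j-1) = (2*k-1-j) + (if j < 2*k then 1 else 0)"
    proof (cases "j < 2*k")
      case True thus ?thesis using j1 by simp
    next
      case False thus ?thesis by simp
    qed
    ultimately show ?thesis by simp
  qed
  have F1: "((k*n-2-(j-1)) choose (n-2)) = ((k*n-2-j) choose (n-2)) + ((k*n-2-j) choose (n-3))"
  proof -
    have e1: "k*n-2-(j-1) = Suc (k*n-2-j)" using j1 j2 kn n by simp
    have e2: "n - 2 = Suc (n-3)" using n by simp
    show ?thesis unfolding e1 e2 binomial_Suc_Suc by (simp only: add.commute)
  qed
  let ?s = "\<lambda>l. s_coeff k l"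
  have S1: "(\<Sum>l=1..n-2. ?s l * of_nat (?T1 l)) = (\<Sum>l=1..n-3. ?s l * of_nat (?T1 l)) + ?s (n-2) * of_nat (?T1 (n-2))"
    using nM by (simp add: sum.cl_ivl_Suc)
  have S2: "(\<Sum>l=1..n-2. ?s l * of_nat (?T2 l)) = (\<Sum>l=1..n-3. ?s l * of_nat (?T2 l)) + ?s (n-2) * of_nat (?T2 (n-2))"
    using nM by (simp add: sum.cl_ivl_Suc)
  have S3: "(\<Sum>l=1..n-3. ?s l * of_nat (?T1 l)) = (\<Sum>l=1..n-3. ?s l * of_nat (?T2 l)) + (\<Sum>l=1..n-3. ?s l * of_nat (?T3 l))"
  proof -
    have "(\<Sum>l=1..n-3. ?s l * of_nat (?T1 l)) = (\<Sum>l=1..n-3. ?s l * of_nat (?T2 l) + ?s l * of_nat (?T3 l))"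
    proof (rule sum.cong)
      fix l assume l: "l \<in> {1..n-3}"
      show "?s l * of_nat (?T1 l) = ?s l * of_nat (?T2 l) + ?s l * of_nat (?T3 l)"
        by (simp only: P1[OF l] of_nat_add distrib_left)
    qed simp
    also have "\<dots> = (\<Sum>l=1..n-3. ?s l * of_nat (?T2 l)) + (\<Sum>l=1..n-3. ?s l * of_nat (?T3 l))"
      by (rule sum.distrib)
    finally show ?thesis .
  qed
  define F where "F = of_nat ((k*n-2-j) choose (n-3)) - (\<Sum>l=1..n-3. ?s l * of_nat (?T3 l))"
  have h1: "EE k n (j-1) = (of_nat ((k*n-2-j) choose (n-2)) + of_nat ((k*n-2-j) choose (n-3)))
      - (((\<Sum>l=1..n-3. ?s l * of_nat (?T2 l)) + (\<Sum>l=1..n-3. ?s l * of_nat (?T3 l)))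
         + ?s (n-2) * (of_nat (?T2 (n-2)) + of_nat (if j < 2*k then 1 else 0)))"
    unfolding EE_def F1 S1 S3 P2 by (simp only: of_nat_add)
  have h2: "EE k n j = of_nat ((k*n-2-j) choose (n-2)) - ((\<Sum>l=1..n-3. ?s l * of_nat (?T2 l)) + ?s (n-2) * of_nat (?T2 (n-2)))"
    unfolding EE_def S2 by (rule refl)
  have lin: "\<And>E1 E2 F a b X2 X3 u v w. E1 = (a + b) - ((X2 + X3) + u*(v + w)) \<Longrightarrow> E2 = a - (X2 + u*v) \<Longrightarrow> F = b - X3 \<Longrightarrow> E1 = E2 + F - u*(w::rat)"
    by (simp add: algebra_simps)
  have main0: "EE k n (j-1) = EE k n j + F - ?s (n-2) * of_nat (if j < 2*k then 1 else 0)"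
    by (rule lin[OF h1 h2 F_def])
  have main: "EE k n (j-1) = EE k n j + F - (if j < 2*k then ?s (n-2) else 0)"
    using main0 by simp
  show ?thesis
  proof (cases "2*k \<le> j")
    case True
    have "F = EE k (n-1) (j-k)"
    proof -
      have a: "k*(n-1)-2-(j-k) = k*n-2-j" using kn j2 j1 n True
        by (simp add: diff_mult_distrib2)
      have b: "n-1-2 = n-3" by simp
      have c: "(\<Sum>l=1..n-1-2. ?s l * of_nat ((k*(n-1-l)-1-(j-k)) choose (n-1-l-1))) = (\<Sum>l=1..n-3. ?s l * of_nat (?T3 l))"
      proof (rule sum.cong)
        fix l assume l: "l \<in> {1..n-3}"
        have "n-1-l + 1 = n-l" using l by auto
        hence "k*(n-1-l) + k = k*(n-l)" by (metis add_mult_distrib2 mult_1_right)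
        hence "k*(n-1-l)-1-(j-k) = k*(n-l)-1-j" using True by linarith
        moreover have "n-1-l-1 = n-l-2" by simp
        ultimately show "?s l * of_nat ((k*(n-1-l)-1-(j-k)) choose (n-1-l-1)) = ?s l * of_nat (?T3 l)" by simp
      qed (simp only: b)
      show ?thesis unfolding EE_def F_def a c by (simp only: b)
    qed
    then show ?thesis using main True by simp
  next
    case False
    have R: "(\<Sum>l=1..Suc M. s_coeff k l * of_nat (((2*k-j) + k*(Suc M-l) - 1) choose (Suc M-l))) = (of_nat ((k-1+(2*k-j)+k*M-1) choose M) :: rat)"
      by (rule RHs[OF k])
    have "(\<Sum>l=1..Suc M. s_coeff k l * of_nat (((2*k-j) + k*(Suc M-l) - 1) choose (Suc M-l)))
       = (\<Sum>l=1..M. s_coeff k l * of_nat (((2*k-j) + k*(Suc M-l) - 1) choose (Suc M-l))) + ?s (Suc M)"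
      using False by (simp add: sum.cl_ivl_Suc)
    also have "(\<Sum>l=1..M. s_coeff k l * of_nat (((2*k-j) + k*(Suc M-l) - 1) choose (Suc M-l)))
       = (\<Sum>l=1..n-3. ?s l * of_nat (?T3 l))"
    proof (rule sum.cong)
      show "{1..M} = {1..n-3}" unfolding M_def ..
      fix l assume l: "l \<in> {1..n-3}"
      have "Suc M-l + 2 = n-l" using l nM by auto
      hence "k*(Suc M-l) + k*2 = k*(n-l)" by (metis add_mult_distrib2)
      hence "k*(Suc M-l) + 2*k = k*(n-l)" by simp
      hence "(2*k-j) + k*(Suc M-l) - 1 = k*(n-l)-1-j" using False by linarith
      moreover have "Suc M - l = n-l-2" using nM by simp
      ultimately show "s_coeff k l * of_nat (((2*k-j) + k*(Suc M-l) - 1) choose (Suc M-l)) = ?s l * of_nat (?T3 l)" by simp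
    qed
    finally have "(\<Sum>l=1..n-3. ?s l * of_nat (?T3 l)) + ?s (n-2) = of_nat ((k-1+(2*k-j)+k*M-1) choose M)"
      using R nM by simp
    moreover have "k-1+(2*k-j)+k*M-1 = k*n-2-j" using nM k False by (simp add: algebra_simps)
    ultimately have "F = ?s (n-2)" unfolding F_def M_def by (simp add: algebra_simps)
    then show ?thesis using main False by simp
  qed
qed

definition DD :: "nat \<Rightarrow> nat \<Rightarrow> nat \<Rightarrow> rat" where
  "DD k n j = (if 2 \<le> n \<and> k \<le> j \<and> j \<le> (k-1)*n then d_coeff k n j else 0)"

lemma coeff_D: "coeff (fps_nth (D_fps k) n) j = DD k n j"
proof (cases "n \<ge> 2")
  case True
  have "coeff (fps_nth (D_fps k) n) j = (\<Sum>j'=k..(k-1)*n. coeff (monom (d_coeff k n j') j') j)"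
    unfolding D_fps_def using True by (simp add: coeff_sum)
  also have "\<dots> = (\<Sum>j'=k..(k-1)*n. if j' = j then d_coeff k n j' else 0)"
    by simp
  also have "\<dots> = DD k n j" unfolding DD_def using True by (simp add: sum.delta)
  finally show ?thesis .
next
  case False
  then show ?thesis unfolding D_fps_def DD_def by simp
qed

lemma core:
  assumes k: "k \<ge> 2"
  shows "DD k n j - (if j = 0 then 0 else DD k n (j-1)) + (if n = 0 \<or> j < k then 0 else DD k (n-1) (j-k))
    = (if 2 \<le> n \<and> j = k then s_coeff k (n-1) else 0) - (if n = 2 \<and> j = 2*k-1 then 1 else 0)"
proof (cases "n \<ge> 2")
  case False
  then show ?thesis unfolding DD_def by auto
next
  case n: True
  have kn2: "(k-1)*n \<ge> (k-1)*2" using n by simp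
  have "(k-1)*2 = 2*k - 2" by simp
  hence kk: "k \<le> (k-1)*n" using kn2 k by arith
  have nn: "n = (n-1) + 1" using n by simp
  have kn1: "(k-1)*n = (k-1)*(n-1) + (k-1)" by (subst nn, simp only: add_mult_distrib2 mult_1_right)
  consider "j < k" | "j = k" | "k < j \<and> j \<le> (k-1)*n" | "j = (k-1)*n + 1" | "j > (k-1)*n + 1" by linarith
  then show ?thesis
  proof cases
    case 1
    then show ?thesis unfolding DD_def by auto
  next
    case 2
    have "DD k n j = s_coeff k (n-1)" unfolding DD_def using 2 n kk k d_E[OF k n, of k] E_base[OF k n] by auto
    moreover have "DD k n (j-1) = 0" unfolding DD_def using 2 k by auto
    moreover have "DD k (n-1) (j-k) = 0" unfolding DD_def using 2 k by auto
    ultimately show ?thesis using 2 k n by auto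
  next
    case 3
    have a: "DD k n j = EE k n j" unfolding DD_def using 3 n d_E[OF k n, of j] by auto
    have b: "DD k n (j-1) = EE k n (j-1)" unfolding DD_def using 3 n d_E[OF k n, of "j-1"] by auto
    have r: "(if 2 \<le> n \<and> j = k then s_coeff k (n-1) else 0) - (if n = 2 \<and> j = 2*k-1 then 1 else (0::rat)) = 0"
      using 3 k by auto
    show ?thesis
    proof (cases "n = 2")
      case True
      have "DD k (n-1) (j-k) = 0" unfolding DD_def using True by auto
      then show ?thesis using a b r True 3 k by (simp add: E_two)
    next
      case False
      hence n3: "n \<ge> 3" using n by simp
      have kn3: "(k-1)*(n-1) \<ge> (k-1)*2" using n3 by (intro mult_le_mono2) linarith
      have st: "EE k n (j-1) = EE k n j + (if 2*k \<le> j then EE k (n-1) (j-k) else 0)"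
        using E_step[OF k n3] 3 by auto
      have "DD k (n-1) (j-k) = (if 2*k \<le> j then EE k (n-1) (j-k) else 0)"
      proof (cases "2*k \<le> j")
        case True
        have n12: "n-1 \<ge> 2" using n3 by linarith
        have jk: "k \<le> j-k" using True by linarith
        have "d_coeff k (n-1) (j-k) = EE k (n-1) (j-k)" by (rule d_E[OF k n12 jk])
        moreover have "j - k \<le> (k-1)*(n-1)" using 3 kn1 k by linarith
        ultimately show ?thesis unfolding DD_def using True n3 by auto
      next
        case False
        then show ?thesis unfolding DD_def by auto
      qed
      then show ?thesis using a b r st 3 k n3 by simp
    qed
  next
    case 4
    have a: "DD k n j = 0" unfolding DD_def using 4 by auto
    have b: "DD k n (j-1) = 1" unfolding DD_def using 4 n kk k d_E[OF k n kk] E_top[OF k n] by auto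
    show ?thesis
    proof (cases "n = 2")
      case True
      have "DD k (n-1) (j-k) = 0" unfolding DD_def using True by auto
      moreover have "j = 2*k-1" using True 4 k by (simp add: algebra_simps)
      moreover have "j \<noteq> k" using 4 kn2 k by linarith
      ultimately show ?thesis using a b True k by simp
    next
      case False
      hence n3: "n \<ge> 3" using n by simp
      have kn3: "(k-1)*(n-1) \<ge> (k-1)*2" using n3 by (intro mult_le_mono2) linarith
      have jk: "j - k = (k-1)*(n-1)" using 4 kn1 k by linarith
      have "DD k (n-1) (j-k) = 1"
      proof -
        have n12: "n-1 \<ge> 2" using n3 by linarith
        have "(k-1)*2 = 2*k - 2" by simp
        hence kk3: "k \<le> (k-1)*(n-1)" using kn3 k by arith
        show ?thesis unfolding DD_def jk using n12 kk3 d_E[OF k n12 kk3] E_top[OF k n12] by simp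
      qed
      moreover have "j \<noteq> k" using 4 kn2 k by linarith
      moreover have "j \<ge> k" using 4 kn2 k by linarith
      ultimately show ?thesis using a b False k n3 by simp
    qed
  next
    case 5
    have a: "DD k n j = 0" "DD k n (j-1) = 0" unfolding DD_def using 5 by auto
    have "DD k (n-1) (j-k) = 0" unfolding DD_def using 5 kn1 by auto
    moreover have "j \<noteq> k" using 5 kn2 k by linarith
    moreover have "\<not> (n = 2 \<and> j = 2*k-1)" using 5 k by auto
    moreover have "\<not> j < k" "j \<noteq> 0" "n \<noteq> 0" using 5 kk n by auto
    ultimately show ?thesis using a by simp
  qed
qed

theorem mainTheorem3:
  fixes k :: nat
  assumes "k \<ge> 2"
  shows "(fps_const (1 - [:0, 1:]) + fps_const (monom 1 k) * fps_X) * D_fps k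
         = fps_const (monom 1 k) * fps_X * S_fps k - fps_const (monom 1 (2 * k - 1)) * fps_X ^ 2"
proof (rule fps_ext)
  fix n
  have L: "fps_nth ((fps_const (1 - [:0, 1:]) + fps_const (monom 1 k) * fps_X) * D_fps k) n
      = (1 - [:0, 1:]) * fps_nth (D_fps k) n + monom 1 k * (if n = 0 then 0 else fps_nth (D_fps k) (n-1))"
    by (simp add: distrib_right mult.assoc)
  have R: "fps_nth (fps_const (monom 1 k) * fps_X * S_fps k - fps_const (monom 1 (2 * k - 1)) * fps_X ^ 2) n
      = monom 1 k * (if n = 0 then 0 else fps_nth (S_fps k) (n-1)) - monom 1 (2*k-1) * (if n = 2 then 1 else 0)"
    by (simp add: mult.assoc)
  have "(1 - [:0, 1:]) * fps_nth (D_fps k) n + monom 1 k * (if n = 0 then 0 else fps_nth (D_fps k) (n-1))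
     = monom 1 k * (if n = 0 then 0 else fps_nth (S_fps k) (n-1)) - monom 1 (2*k-1) * (if n = 2 then 1 else (0::rat poly))"
  proof (rule poly_eqI)
    fix j
    have c1: "coeff ((1 - [:0, 1:]) * p) j = coeff p j - (if j = 0 then 0 else coeff p (j-1))" for p :: "rat poly"
      by (cases j) (simp_all add: algebra_simps)
    have "coeff ((1 - [:0, 1:]) * fps_nth (D_fps k) n + monom 1 k * (if n = 0 then 0 else fps_nth (D_fps k) (n-1))) j
       = DD k n j - (if j = 0 then 0 else DD k n (j-1)) + (if n = 0 \<or> j < k then 0 else DD k (n-1) (j-k))"
      by (simp add: c1 coeff_monom_mult coeff_D)
    also have "\<dots> = (if 2 \<le> n \<and> j = k then s_coeff k (n-1) else 0) - (if n = 2 \<and> j = 2*k-1 then 1 else 0)"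
      by (rule core[OF assms])
    also have "\<dots> = coeff (monom 1 k * (if n = 0 then 0 else fps_nth (S_fps k) (n-1)) - monom 1 (2*k-1) * (if n = 2 then 1 else (0::rat poly))) j"
      using assms by (auto simp: coeff_monom_mult S_fps_def coeff_pCons split: nat.split)
    finally show "coeff ((1 - [:0, 1:]) * fps_nth (D_fps k) n + monom 1 k * (if n = 0 then 0 else fps_nth (D_fps k) (n-1))) j
       = coeff (monom 1 k * (if n = 0 then 0 else fps_nth (S_fps k) (n-1)) - monom 1 (2*k-1) * (if n = 2 then 1 else (0::rat poly))) j" .
  qed
  then show "fps_nth ((fps_const (1 - [:0, 1:]) + fps_const (monom 1 k) * fps_X) * D_fps k) n
    = fps_nth (fps_const (monom 1 k) * fps_X * S_fps k - fps_const (monom 1 (2 * k - 1)) * fps_X ^ 2) n"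
    using L R by simp
qed

end
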